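(* Let $\mathbb{E}$ be a finitely complete category, $\Sigma$ a fibrational class of split epimorphisms, and suppose $\mathbb{E}$ is a $\Sigma$-Mal'tsev category. Let $R$ be a reflexive relation and $S$ a $\Sigma$-relation on an object $X$ such that $[R,S]=0$. If $R'$ is a reflexive relation on $X$ with $R'\subseteq R$, then $[R',S]=0$.
   Context: A split epimorphism is a pair $(f,s)$ with $fs=1$. A class $\Sigma$ of split epimorphisms is fibrational if it contains all split epimorphisms $(f,s)$ with $f$ invertible and is stable under pullback along any morphism. A pair of morphisms with common codomain $Z$ is jointly extremally epic if it factors jointly through no non-invertible monomorphism into $Z$. $\mathbb{E}$ is $\Sigma$-Mal'tsev if for every split epimorphism $(f,s)\colon X\rightleftarrows Y$ in $\Sigma$ and every split epimorphism $(g,t)$ with $g\colon Y'\to Y$, letting $X'=Y'\times_YX$, $s'=(1_{Y'},sg)$, $\bar t=(tf,1_X)$, the pair $(s',\bar t)$ is jointly extremally epic. A $\Sigma$-relation is a reflexive relation $(d_0,d_1)\colon S\rightarrowtail X\times X$ with reflexivity $s_0$ such that $(d_0,s_0)\in\Sigma$. For reflexive relations $R,S$ on $X$, $R\times_XS$ is the pullback of $d_0^S$ along $d_1^R$ (elements $xRySz$), $\sigma_0^R\colon R\to R\times_XS$, $xRy\mapsto xRySy$, and $\sigma_0^S\colon S\to R\times_XS$, $ySz\mapsto yRySz$. $[R,S]=0$ means there is a morphism $p\colon R\times_XS\to X$ with $p\sigma_0^R=d_0^R$ and $p\sigma_0^S=d_1^S$. *)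

theory Defs
  imports Main
begin

text \<open>A (possibly large) category, presented by its objects, arrows, source, target,
  identities and composition; comp C g f denotes g after f.\<close>

record ('o, 'a) cat =
  obj :: "'o set"
  arr :: "'a set"
  src :: "'a \<Rightarrow> 'o"
  tgt :: "'a \<Rightarrow> 'o"
  ident :: "'o \<Rightarrow> 'a"
  comp :: "'a \<Rightarrow> 'a \<Rightarrow> 'a"

definition hom :: "('o, 'a) cat \<Rightarrow> 'a \<Rightarrow> 'o \<Rightarrow> 'o \<Rightarrow> bool" where
  "hom C f X Y \<longleftrightarrow> f \<in> arr C \<and> src C f = X \<and> tgt C f = Y"

definition category :: "('o, 'a) cat \<Rightarrow> bool" where
  "category C \<longleftrightarrow>
     (\<forall>f\<in>arr C. src C f \<in> obj C \<and> tgt C f \<in> obj C) \<and>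
     (\<forall>X\<in>obj C. hom C (ident C X) X X) \<and>
     (\<forall>f\<in>arr C. \<forall>g\<in>arr C. tgt C f = src C g \<longrightarrow>
         hom C (comp C g f) (src C f) (tgt C g)) \<and>
     (\<forall>f\<in>arr C. \<forall>g\<in>arr C. \<forall>h\<in>arr C. tgt C f = src C g \<and> tgt C g = src C h \<longrightarrow>
         comp C h (comp C g f) = comp C (comp C h g) f) \<and>
     (\<forall>f\<in>arr C. comp C f (ident C (src C f)) = f \<and> comp C (ident C (tgt C f)) f = f)"

definition mono :: "('o, 'a) cat \<Rightarrow> 'a \<Rightarrow> bool" where
  "mono C m \<longleftrightarrow> m \<in> arr C \<and>
     (\<forall>a b T. hom C a T (src C m) \<and> hom C b T (src C m) \<and> comp C m a = comp C m b \<longrightarrow> a = b)"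

definition iso :: "('o, 'a) cat \<Rightarrow> 'a \<Rightarrow> bool" where
  "iso C f \<longleftrightarrow> f \<in> arr C \<and>
     (\<exists>g. hom C g (tgt C f) (src C f) \<and> comp C g f = ident C (src C f) \<and>
          comp C f g = ident C (tgt C f))"

definition is_pullback :: "('o, 'a) cat \<Rightarrow> 'a \<Rightarrow> 'a \<Rightarrow> 'a \<Rightarrow> 'a \<Rightarrow> bool" where
  "is_pullback C f g p q \<longleftrightarrow>
     f \<in> arr C \<and> g \<in> arr C \<and> tgt C f = tgt C g \<and>
     hom C p (src C p) (src C f) \<and> hom C q (src C p) (src C g) \<and>
     comp C f p = comp C g q \<and>
     (\<forall>T x y. hom C x T (src C f) \<and> hom C y T (src C g) \<and> comp C f x = comp C g y \<longrightarrow>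
        (\<exists>u. hom C u T (src C p) \<and> comp C p u = x \<and> comp C q u = y \<and>
             (\<forall>v. hom C v T (src C p) \<and> comp C p v = x \<and> comp C q v = y \<longrightarrow> v = u)))"

definition terminal :: "('o, 'a) cat \<Rightarrow> 'o \<Rightarrow> bool" where
  "terminal C T \<longleftrightarrow> T \<in> obj C \<and>
     (\<forall>X\<in>obj C. \<exists>f. hom C f X T \<and> (\<forall>g. hom C g X T \<longrightarrow> g = f))"

definition finitely_complete :: "('o, 'a) cat \<Rightarrow> bool" where
  "finitely_complete C \<longleftrightarrow> (\<exists>T. terminal C T) \<and>
     (\<forall>f g. f \<in> arr C \<and> g \<in> arr C \<and> tgt C f = tgt C g \<longrightarrow>
        (\<exists>p q. is_pullback C f g p q))"

definition split_epi :: "('o, 'a) cat \<Rightarrow> 'a \<Rightarrow> 'a \<Rightarrow> bool" where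
  "split_epi C f s \<longleftrightarrow> f \<in> arr C \<and> hom C s (tgt C f) (src C f) \<and>
     comp C f s = ident C (tgt C f)"

definition fibrational :: "('o, 'a) cat \<Rightarrow> ('a \<times> 'a) set \<Rightarrow> bool" where
  "fibrational C \<Sigma> \<longleftrightarrow>
     (\<forall>(f, s)\<in>\<Sigma>. split_epi C f s) \<and>
     (\<forall>f s. split_epi C f s \<and> iso C f \<longrightarrow> (f, s) \<in> \<Sigma>) \<and>
     (\<forall>f s h h' f' s'. (f, s) \<in> \<Sigma> \<and> h \<in> arr C \<and> tgt C h = tgt C f \<and>
         is_pullback C f h h' f' \<and> hom C s' (src C h) (src C f') \<and>
         comp C f' s' = ident C (src C h) \<and> comp C h' s' = comp C s h \<longrightarrow> (f', s') \<in> \<Sigma>)"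

definition jointly_extremally_epic :: "('o, 'a) cat \<Rightarrow> 'a \<Rightarrow> 'a \<Rightarrow> bool" where
  "jointly_extremally_epic C a b \<longleftrightarrow>
     (\<forall>m u v. mono C m \<and> tgt C m = tgt C a \<and>
        hom C u (src C a) (src C m) \<and> hom C v (src C b) (src C m) \<and>
        comp C m u = a \<and> comp C m v = b \<longrightarrow> iso C m)"

text \<open>\<Sigma>-Mal'tsev: for (f,s) : X \<rightleftharpoons> Y in \<Sigma>, a split epi (g,t) with g : Y' \<rightarrow> Y,
  a pullback X' with projections p1 : X' \<rightarrow> Y', p2 : X' \<rightarrow> X (g p1 = f p2),
  s' = (1, s g) and tb = (t f, 1), the pair (s', tb) is jointly extremally epic.\<close>
definition sigma_maltsev :: "('o, 'a) cat \<Rightarrow> ('a \<times> 'a) set \<Rightarrow> bool" where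
  "sigma_maltsev C \<Sigma> \<longleftrightarrow>
     (\<forall>f s g t p1 p2 s' tb. (f, s) \<in> \<Sigma> \<and> split_epi C g t \<and> tgt C g = tgt C f \<and>
        is_pullback C g f p1 p2 \<and>
        hom C s' (src C g) (src C p1) \<and> comp C p1 s' = ident C (src C g) \<and>
        comp C p2 s' = comp C s g \<and>
        hom C tb (src C f) (src C p1) \<and> comp C p1 tb = comp C t f \<and>
        comp C p2 tb = ident C (src C f) \<longrightarrow>
        jointly_extremally_epic C s' tb)"

text \<open>(d0,d1) jointly monic, i.e. \<langle>d0,d1\<rangle> : S \<rightarrow> X \<times> X is a monomorphism.\<close>
definition jointly_monic :: "('o, 'a) cat \<Rightarrow> 'a \<Rightarrow> 'a \<Rightarrow> bool" where
  "jointly_monic C d0 d1 \<longleftrightarrow>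
     (\<forall>a b T. hom C a T (src C d0) \<and> hom C b T (src C d0) \<and>
        comp C d0 a = comp C d0 b \<and> comp C d1 a = comp C d1 b \<longrightarrow> a = b)"

definition refl_rel :: "('o, 'a) cat \<Rightarrow> 'o \<Rightarrow> 'a \<Rightarrow> 'a \<Rightarrow> 'a \<Rightarrow> bool" where
  "refl_rel C X d0 d1 s0 \<longleftrightarrow>
     hom C d0 (src C d0) X \<and> hom C d1 (src C d0) X \<and> hom C s0 X (src C d0) \<and>
     comp C d0 s0 = ident C X \<and> comp C d1 s0 = ident C X \<and> jointly_monic C d0 d1"

definition sigma_rel :: "('o, 'a) cat \<Rightarrow> ('a \<times> 'a) set \<Rightarrow> 'o \<Rightarrow> 'a \<Rightarrow> 'a \<Rightarrow> 'a \<Rightarrow> bool" where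
  "sigma_rel C \<Sigma> X d0 d1 s0 \<longleftrightarrow> refl_rel C X d0 d1 s0 \<and> (d0, s0) \<in> \<Sigma>"

text \<open>R' \<subseteq> R as subobjects of X \<times> X.\<close>
definition subrel :: "('o, 'a) cat \<Rightarrow> 'a \<Rightarrow> 'a \<Rightarrow> 'a \<Rightarrow> 'a \<Rightarrow> bool" where
  "subrel C d0' d1' d0 d1 \<longleftrightarrow>
     (\<exists>k. hom C k (src C d0') (src C d0) \<and> comp C d0 k = d0' \<and> comp C d1 k = d1')"

text \<open>[R,S] = 0 for R = (r0,r1,rs), S = (t0,t1,ts): for the pullback R \<times>_X S of t0 along r1
  (projections q1 to R, q2 to S) with \<sigma>R = (1_R, ts r1) and \<sigma>S = (rs t0, 1_S),
  there is p : R \<times>_X S \<rightarrow> X with p \<sigma>R = r0 and p \<sigma>S = t1.\<close>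
definition commutator_trivial ::
  "('o, 'a) cat \<Rightarrow> 'o \<Rightarrow> 'a \<Rightarrow> 'a \<Rightarrow> 'a \<Rightarrow> 'a \<Rightarrow> 'a \<Rightarrow> 'a \<Rightarrow> bool" where
  "commutator_trivial C X r0 r1 rs t0 t1 ts \<longleftrightarrow>
     (\<forall>q1 q2 \<sigma>R \<sigma>S. is_pullback C r1 t0 q1 q2 \<and>
        hom C \<sigma>R (src C r0) (src C q1) \<and> comp C q1 \<sigma>R = ident C (src C r0) \<and>
        comp C q2 \<sigma>R = comp C ts r1 \<and>
        hom C \<sigma>S (src C t0) (src C q1) \<and> comp C q1 \<sigma>S = comp C rs t0 \<and>
        comp C q2 \<sigma>S = ident C (src C t0) \<longrightarrow>
        (\<exists>p. hom C p (src C q1) X \<and> comp C p \<sigma>R = r0 \<and> comp C p \<sigma>S = t1))"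

end

theory Submission
  imports Defs
begin

lemma hom_arr: "hom C f A B \<Longrightarrow> f \<in> arr C" by (simp add: hom_def)

lemma cat_comp: "category C \<Longrightarrow> hom C f A B \<Longrightarrow> hom C g B D \<Longrightarrow> hom C (comp C g f) A D"
  unfolding category_def hom_def by metis

lemma cat_assoc: "category C \<Longrightarrow> hom C f A B \<Longrightarrow> hom C g B D \<Longrightarrow> hom C h D E \<Longrightarrow>
  comp C (comp C h g) f = comp C h (comp C g f)"
  unfolding category_def hom_def by metis

lemma cat_idl: "category C \<Longrightarrow> hom C f A B \<Longrightarrow> comp C (ident C B) f = f"
  unfolding category_def hom_def by metis

lemma cat_idr: "category C \<Longrightarrow> hom C f A B \<Longrightarrow> comp C f (ident C A) = f"
  unfolding category_def hom_def by metis

lemma cat_id: "category C \<Longrightarrow> hom C f A B \<Longrightarrow> hom C (ident C A) A A \<and> hom C (ident C B) B B"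
  unfolding category_def hom_def by metis

lemma pb_hom:
  assumes "is_pullback C f g p q"
  shows "hom C p (src C p) (src C f)" "hom C q (src C p) (src C g)"
    "comp C f p = comp C g q"
  using assms unfolding is_pullback_def by auto

lemma pb_exists:
  assumes "is_pullback C f g p q" "hom C x T (src C f)" "hom C y T (src C g)"
    "comp C f x = comp C g y"
  obtains u where "hom C u T (src C p)" "comp C p u = x" "comp C q u = y"
  using assms unfolding is_pullback_def by blast

lemma pb_unique:
  assumes C: "category C" and pb: "is_pullback C f g p q"
    and v: "hom C v T (src C p)" and w: "hom C w T (src C p)"
    and e1: "comp C p v = comp C p w" and e2: "comp C q v = comp C q w"
  shows "v = w"
proof -
  have hp: "hom C p (src C p) (src C f)" and hq: "hom C q (src C p) (src C g)"
    and sq: "comp C f p = comp C g q" using pb_hom[OF pb] by auto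
  have hf: "hom C f (src C f) (tgt C f)" and hg: "hom C g (src C g) (tgt C f)"
    using pb unfolding is_pullback_def hom_def by auto
  have x: "hom C (comp C p v) T (src C f)" using cat_comp[OF C v hp] .
  have y: "hom C (comp C q v) T (src C g)" using cat_comp[OF C v hq] .
  have eq: "comp C f (comp C p v) = comp C g (comp C q v)"
    using cat_assoc[OF C v hp hf] cat_assoc[OF C v hq hg] sq by simp
  from pb x y eq obtain u where
    "\<forall>z. hom C z T (src C p) \<and> comp C p z = comp C p v \<and> comp C q z = comp C q v \<longrightarrow> z = u"
    unfolding is_pullback_def by blast
  then show ?thesis using v w e1 e2 by metis
qed

theorem proposition3p9:
  fixes C :: "('o, 'a) cat" and \<Sigma> :: "('a \<times> 'a) set" and X :: 'o
    and r0 r1 rs t0 t1 ts r0' r1' rs' :: 'a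
  assumes "category C"
    and "finitely_complete C"
    and "fibrational C \<Sigma>"
    and "sigma_maltsev C \<Sigma>"
    and "refl_rel C X r0 r1 rs"
    and "sigma_rel C \<Sigma> X t0 t1 ts"
    and "commutator_trivial C X r0 r1 rs t0 t1 ts"
    and "refl_rel C X r0' r1' rs'"
    and "subrel C r0' r1' r0 r1"
  shows "commutator_trivial C X r0' r1' rs' t0 t1 ts"
proof -
  note Cc = assms(1)
  define R where "R = src C r0"
  define R' where "R' = src C r0'"
  define S where "S = src C t0"
  have r0: "hom C r0 R X" and r1: "hom C r1 R X" and rs: "hom C rs X R"
    and r0rs: "comp C r0 rs = ident C X" and r1rs: "comp C r1 rs = ident C X"
    and jm: "jointly_monic C r0 r1"
    using assms(5) unfolding refl_rel_def R_def by auto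
  have r0': "hom C r0' R' X" and r1': "hom C r1' R' X" and rs': "hom C rs' X R'"
    and r0rs': "comp C r0' rs' = ident C X" and r1rs': "comp C r1' rs' = ident C X"
    using assms(8) unfolding refl_rel_def R'_def by auto
  have t0: "hom C t0 S X" and t1: "hom C t1 S X" and ts: "hom C ts X S"
    and t0ts: "comp C t0 ts = ident C X"
    using assms(6) unfolding sigma_rel_def refl_rel_def S_def by auto
  obtain k where k: "hom C k R' R" and r0k: "comp C r0 k = r0'" and r1k: "comp C r1 k = r1'"
    using assms(9) unfolding subrel_def R'_def R_def by auto
  have srcr1: "src C r1 = R" and srct0: "src C t0 = S" and srcr1': "src C r1' = R'"
    using r1 r1' S_def unfolding hom_def by auto
  have idR: "hom C (ident C R) R R" and idX: "hom C (ident C X) X X" and idS: "hom C (ident C S) S S"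
    using cat_id[OF Cc r1] cat_id[OF Cc t0] by auto
  obtain q1 q2 where pb: "is_pullback C r1 t0 q1 q2"
    using assms(2) r1 t0 unfolding finitely_complete_def hom_def by metis
  define P where "P = src C q1"
  have q1: "hom C q1 P R" and q2: "hom C q2 P S" and sq: "comp C r1 q1 = comp C t0 q2"
    using pb_hom[OF pb] srcr1 srct0 P_def by auto
  have tsr1: "hom C (comp C ts r1) R S" using cat_comp[OF Cc r1 ts] .
  have e1: "comp C r1 (ident C R) = comp C t0 (comp C ts r1)"
    using cat_idr[OF Cc r1] cat_assoc[OF Cc r1 ts t0] t0ts cat_idl[OF Cc r1] by simp
  obtain sR where sR: "hom C sR R P" and q1sR: "comp C q1 sR = ident C R"
    and q2sR: "comp C q2 sR = comp C ts r1"
    using pb_exists[OF pb, of "ident C R" R "comp C ts r1"] idR tsr1 e1 srcr1 srct0 P_def by auto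
  have rst0: "hom C (comp C rs t0) S R" using cat_comp[OF Cc t0 rs] .
  have e2: "comp C r1 (comp C rs t0) = comp C t0 (ident C S)"
    using cat_idr[OF Cc t0] cat_assoc[OF Cc t0 rs r1] r1rs cat_idl[OF Cc t0] by simp
  obtain sS where sS: "hom C sS S P" and q1sS: "comp C q1 sS = comp C rs t0"
    and q2sS: "comp C q2 sS = ident C S"
    using pb_exists[OF pb, of "comp C rs t0" S "ident C S"] idS rst0 e2 srcr1 srct0 P_def by auto
  obtain p where p: "hom C p P X" and psR: "comp C p sR = r0" and psS: "comp C p sS = t1"
    using assms(7) pb sR q1sR q2sR sS q1sS q2sS
    unfolding commutator_trivial_def R_def S_def P_def by blast
  have krs: "comp C k rs' = rs"
  proof -
    have h: "hom C (comp C k rs') X R" using cat_comp[OF Cc rs' k] .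
    have "comp C r0 (comp C k rs') = comp C r0 rs"
      using cat_assoc[OF Cc rs' k r0] r0k r0rs r0rs' by simp
    moreover have "comp C r1 (comp C k rs') = comp C r1 rs"
      using cat_assoc[OF Cc rs' k r1] r1k r1rs r1rs' by simp
    ultimately show ?thesis using jm h rs r0 unfolding jointly_monic_def hom_def R_def by blast
  qed
  show ?thesis
    unfolding commutator_trivial_def
  proof (intro allI impI)
    fix q1' q2' sR' sS'
    assume A: "is_pullback C r1' t0 q1' q2' \<and>
        hom C sR' (src C r0') (src C q1') \<and> comp C q1' sR' = ident C (src C r0') \<and>
        comp C q2' sR' = comp C ts r1' \<and>
        hom C sS' (src C t0) (src C q1') \<and> comp C q1' sS' = comp C rs' t0 \<and>
        comp C q2' sS' = ident C (src C t0)"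
    define P' where "P' = src C q1'"
    have pb': "is_pullback C r1' t0 q1' q2'" using A by blast
    have q1': "hom C q1' P' R'" and q2': "hom C q2' P' S" and sq': "comp C r1' q1' = comp C t0 q2'"
      using pb_hom[OF pb'] srcr1' srct0 P'_def by auto
    have sR': "hom C sR' R' P'" and q1sR': "comp C q1' sR' = ident C R'"
      and q2sR': "comp C q2' sR' = comp C ts r1'"
      and sS': "hom C sS' S P'" and q1sS': "comp C q1' sS' = comp C rs' t0"
      and q2sS': "comp C q2' sS' = ident C S"
      using A R'_def S_def P'_def by auto
    have kq1': "hom C (comp C k q1') P' R" using cat_comp[OF Cc q1' k] .
    have e3: "comp C r1 (comp C k q1') = comp C t0 q2'"
      using cat_assoc[OF Cc q1' k r1] r1k sq' by simp
    obtain K where K: "hom C K P' P" and q1K: "comp C q1 K = comp C k q1'"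
      and q2K: "comp C q2 K = q2'"
      using pb_exists[OF pb, of "comp C k q1'" P' q2'] kq1' q2' e3 srcr1 srct0 P_def by auto
    have KsR': "comp C K sR' = comp C sR k"
    proof (rule pb_unique[OF Cc pb])
      show "hom C (comp C K sR') R' (src C q1)" using cat_comp[OF Cc sR' K] P_def by simp
      show "hom C (comp C sR k) R' (src C q1)" using cat_comp[OF Cc k sR] P_def by simp
      have "comp C q1 (comp C K sR') = k"
        using cat_assoc[OF Cc sR' K q1, symmetric] q1K cat_assoc[OF Cc sR' q1' k] q1sR'
          cat_idr[OF Cc k] by simp
      moreover have "comp C q1 (comp C sR k) = k"
        using cat_assoc[OF Cc k sR q1, symmetric] q1sR cat_idl[OF Cc k] by simp
      ultimately show "comp C q1 (comp C K sR') = comp C q1 (comp C sR k)" by simp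
      have "comp C q2 (comp C K sR') = comp C ts r1'"
        using cat_assoc[OF Cc sR' K q2, symmetric] q2K q2sR' by simp
      moreover have "comp C q2 (comp C sR k) = comp C ts r1'"
        using cat_assoc[OF Cc k sR q2, symmetric] q2sR cat_assoc[OF Cc k r1 ts] r1k by simp
      ultimately show "comp C q2 (comp C K sR') = comp C q2 (comp C sR k)" by simp
    qed
    have KsS': "comp C K sS' = sS"
    proof (rule pb_unique[OF Cc pb])
      show "hom C (comp C K sS') S (src C q1)" using cat_comp[OF Cc sS' K] P_def by simp
      show "hom C sS S (src C q1)" using sS P_def by simp
      have "comp C q1 (comp C K sS') = comp C rs t0"
        using cat_assoc[OF Cc sS' K q1, symmetric] q1K cat_assoc[OF Cc sS' q1' k] q1sS'
          cat_assoc[OF Cc t0 rs' k, symmetric] krs by simp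
      then show "comp C q1 (comp C K sS') = comp C q1 sS" using q1sS by simp
      have "comp C q2 (comp C K sS') = ident C S"
        using cat_assoc[OF Cc sS' K q2, symmetric] q2K q2sS' by simp
      then show "comp C q2 (comp C K sS') = comp C q2 sS" using q2sS by simp
    qed
    have pK: "hom C (comp C p K) P' X" using cat_comp[OF Cc K p] .
    have "comp C (comp C p K) sR' = r0'"
      using cat_assoc[OF Cc sR' K p] KsR' cat_assoc[OF Cc k sR p, symmetric] psR r0k by simp
    moreover have "comp C (comp C p K) sS' = t1"
      using cat_assoc[OF Cc sS' K p] KsS' psS by simp
    ultimately show "\<exists>p. hom C p (src C q1') X \<and> comp C p sR' = r0' \<and> comp C p sS' = t1"
      using pK P'_def by blast
  qed
qed

end
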